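(* Let $\phi$ be a probability density on $\mathbb{R}$ and consider the location-scale family $f(x;\mu,\sigma)=\sigma^{-1}\phi((x-\mu)/\sigma)$, $(\mu,\sigma)\in\mathbb{R}\times(0,\infty)$. Let $X_1,\dots,X_n,Y$ be iid from $f(\cdot;\mu_0,\sigma_0)$. Define $$\Lambda_n(\boldsymbol{x}_n,y)=\frac{\sup_{\mu,\sigma}f(y;\mu,\sigma)\prod_{i=1}^n f(x_i;\mu,\sigma)}{\sup_{\mu,\mu_y,\sigma}f(y;\mu_y,\sigma)\prod_{i=1}^n f(x_i;\mu,\sigma)}$$ (i.e. the full model lets $Y$ have its own location $\mu_y$ with common scale $\sigma$), and assume both suprema are finite and positive almost surely. Then $\Lambda_n(\boldsymbol{X}_n,Y)$ (equivalently $-2\log\Lambda_n(\boldsymbol{X}_n,Y)$) is a pivotal quantity: its distribution equals that of $\Lambda_n(Z_1,\dots,Z_n,Z_0)$ with $Z_0,\dots,Z_n$ iid with density $\phi$, and hence does not depend on $(\mu_0,\sigma_0)$. Consequently, if this distribution is continuous at its $1-\alpha$ quantile, the parametric-bootstrap prediction region $\{y:-2\log\Lambda_n(\boldsymbol{x}_n,y)\le\lambda^*_{1-\alpha}\}$ (with $\lambda^*_{1-\alpha}$ the $1-\alpha$ quantile of the exact bootstrap distribution of $-2\log\Lambda_n(\boldsymbol{X}_n^*,Y^* )$, $X_i^*,Y^*$ iid from $f(\cdot;\widehat\mu,\widehat\sigma)$ for any estimator $(\widehat\mu,\widehat\sigma)$) has coverage exactly $1-\alpha$ for all $(\mu_0,\sigma_0)$.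 *)

theory Defs
  imports "HOL-Probability.Probability"
begin

definition lsf :: "(real \<Rightarrow> real) \<Rightarrow> real \<Rightarrow> real \<Rightarrow> real \<Rightarrow> real" where
  "lsf \<phi> x \<mu> \<sigma> = \<phi> ((x - \<mu>) / \<sigma>) / \<sigma>"

definition lsdist :: "(real \<Rightarrow> real) \<Rightarrow> real \<Rightarrow> real \<Rightarrow> real measure" where
  "lsdist \<phi> \<mu> \<sigma> = density lborel (\<lambda>x. ennreal (lsf \<phi> x \<mu> \<sigma>))"

text \<open>Joint law of (X_1,...,X_n, Y) iid from f(.; mu, sigma); the X-sample is a
  function on the index set {..<n} (indices 0..n-1).\<close>
definition sample :: "(real \<Rightarrow> real) \<Rightarrow> nat \<Rightarrow> real \<Rightarrow> real \<Rightarrow> ((nat \<Rightarrow> real) \<times> real) measure" where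
  "sample \<phi> n \<mu> \<sigma> = (PiM {..<n} (\<lambda>_. lsdist \<phi> \<mu> \<sigma>)) \<Otimes>\<^sub>M lsdist \<phi> \<mu> \<sigma>"

definition numsup :: "(real \<Rightarrow> real) \<Rightarrow> nat \<Rightarrow> (nat \<Rightarrow> real) \<Rightarrow> real \<Rightarrow> ereal" where
  "numsup \<phi> n x y = (SUP p \<in> UNIV \<times> {0<..}.
      ereal (lsf \<phi> y (fst p) (snd p) * (\<Prod>i<n. lsf \<phi> (x i) (fst p) (snd p))))"

definition densup :: "(real \<Rightarrow> real) \<Rightarrow> nat \<Rightarrow> (nat \<Rightarrow> real) \<Rightarrow> real \<Rightarrow> ereal" where
  "densup \<phi> n x y = (SUP p \<in> (UNIV \<times> UNIV) \<times> {0<..}.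
      ereal (lsf \<phi> y (snd (fst p)) (snd p) * (\<Prod>i<n. lsf \<phi> (x i) (fst (fst p)) (snd p))))"

definition LR :: "(real \<Rightarrow> real) \<Rightarrow> nat \<Rightarrow> (nat \<Rightarrow> real) \<Rightarrow> real \<Rightarrow> real" where
  "LR \<phi> n x y = real_of_ereal (numsup \<phi> n x y) / real_of_ereal (densup \<phi> n x y)"

definition quantile :: "real measure \<Rightarrow> real \<Rightarrow> real" where
  "quantile D p = Inf {t. measure D {..t} \<ge> p}"

end

theory Submission
  imports Defs
begin

lemma lsf_01[simp]: "lsf \<phi> x 0 1 = \<phi> x" by (simp add: lsf_def)

lemma lsdist_affine:
  assumes [measurable]: "\<phi> \<in> borel_measurable borel" and nn: "\<And>x. \<phi> x \<ge> 0" and s: "\<sigma> > 0"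
  shows "lsdist \<phi> \<mu> \<sigma> = distr (lsdist \<phi> 0 1) borel (\<lambda>z. \<mu> + \<sigma> * z)"
proof (rule measure_eqI)
  show "sets (lsdist \<phi> \<mu> \<sigma>) = sets (distr (lsdist \<phi> 0 1) borel (\<lambda>z. \<mu> + \<sigma> * z))"
    by (simp add: lsdist_def)
  fix A assume "A \<in> sets (lsdist \<phi> \<mu> \<sigma>)"
  hence A[measurable]: "A \<in> sets borel" by (simp add: lsdist_def)
  have "emeasure (lsdist \<phi> \<mu> \<sigma>) A = (\<integral>\<^sup>+x. ennreal (lsf \<phi> x \<mu> \<sigma>) * indicator A x \<partial>lborel)"
    unfolding lsdist_def by (subst emeasure_density) (auto simp: lsf_def)
  also have "\<dots> = ennreal \<sigma> * (\<integral>\<^sup>+z. ennreal (lsf \<phi> (\<mu> + \<sigma> * z) \<mu> \<sigma>) * indicator A (\<mu> + \<sigma> * z) \<partial>lborel)"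
    using s by (subst nn_integral_real_affine[where c=\<sigma> and t=\<mu>]) (auto simp: lsf_def)
  also have "\<dots> = (\<integral>\<^sup>+z. ennreal \<sigma> * (ennreal (lsf \<phi> (\<mu> + \<sigma> * z) \<mu> \<sigma>) * indicator A (\<mu> + \<sigma> * z)) \<partial>lborel)"
    by (subst nn_integral_cmult) (auto simp: lsf_def)
  also have "\<dots> = (\<integral>\<^sup>+z. ennreal (\<phi> z) * indicator (((\<lambda>z. \<mu> + \<sigma> * z) -` A)) z \<partial>lborel)"
    using s nn by (intro nn_integral_cong) (auto simp: lsf_def indicator_def ennreal_mult[symmetric])
  also have "\<dots> = emeasure (distr (lsdist \<phi> 0 1) borel (\<lambda>z. \<mu> + \<sigma> * z)) A"
  proof -
    have pre: "(\<lambda>z. \<mu> + \<sigma> * z) -` A \<in> sets borel" by (rule measurable_sets_borel[OF _ A]) simp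
    have m: "(\<lambda>z. \<mu> + \<sigma> * z) \<in> measurable (density lborel (\<lambda>x. ennreal (\<phi> x))) borel" by simp
    show ?thesis unfolding lsdist_def lsf_01 using pre
      by (subst emeasure_distr[OF m A]) (simp add: emeasure_density[OF _ pre[folded sets_lborel]])
  qed
  finally show "emeasure (lsdist \<phi> \<mu> \<sigma>) A = emeasure (distr (lsdist \<phi> 0 1) borel (\<lambda>z. \<mu> + \<sigma> * z)) A" .
qed

lemma lsdist_prob01:
  assumes [measurable]: "\<phi> \<in> borel_measurable borel" and "(\<integral>\<^sup>+ x. ennreal (\<phi> x) \<partial>lborel) = 1"
  shows "prob_space (lsdist \<phi> 0 1)"
  by (rule prob_spaceI) (simp add: lsdist_def emeasure_density assms)

lemma quantile_exact:
  assumes rd: "real_distribution D" and p: "0 < p" "p < 1"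
    and atom: "measure D {quantile D p} = 0"
  shows "measure D {..quantile D p} = p"
proof -
  interpret real_distribution D by fact
  define q where "q = quantile D p"
  define S where "S = {t. cdf D t \<ge> p}"
  have qS: "q = Inf S" unfolding q_def S_def quantile_def cdf_def2 ..
  have "\<forall>\<^sub>F t in at_top. cdf D t > p"
    using cdf_lim_at_top_prob p by (intro order_tendstoD) auto
  then obtain t0 where "cdf D t0 > p" by (auto simp: eventually_at_top_linorder)
  hence ne: "S \<noteq> {}" unfolding S_def by (metis empty_iff less_imp_le mem_Collect_eq)
  have "\<forall>\<^sub>F t in at_bot. cdf D t < p"
    using cdf_lim_at_bot p by (intro order_tendstoD) auto
  then obtain b where b: "\<And>t. t \<le> b \<Longrightarrow> cdf D t < p" by (auto simp: eventually_at_bot_linorder)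
  have bdd: "bdd_below S"
  proof (rule bdd_belowI[of _ b])
    fix s assume "s \<in> S" hence "\<not> cdf D s < p" by (simp add: S_def)
    thus "b \<le> s" using b[of s] by linarith
  qed
  have cont: "isCont (cdf D) q" using atom isCont_cdf q_def by simp
  have low: "\<And>t. t < q \<Longrightarrow> cdf D t < p"
  proof -
    fix t assume "t < q"
    have "t \<notin> S"
    proof
      assume "t \<in> S" hence "Inf S \<le> t" using bdd by (rule cInf_lower)
      thus False using \<open>t < q\<close> qS by simp
    qed
    thus "cdf D t < p" unfolding S_def by simp
  qed
  have up: "\<And>t. t > q \<Longrightarrow> cdf D t \<ge> p"
  proof -
    fix t assume "t > q"
    have "Inf S < t" using qS \<open>t > q\<close> by simp
    then obtain s where "s \<in> S" "s < t" using cInf_less_iff[OF ne bdd] by blast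
    thus "cdf D t \<ge> p" unfolding S_def using cdf_nondecreasing[of s t] by simp
  qed
  have l1: "cdf D q \<le> p"
  proof (rule tendsto_upperbound)
    show "(cdf D \<longlongrightarrow> cdf D q) (at_left q)"
      using cont by (simp add: isCont_def filterlim_at_split)
    show "\<forall>\<^sub>F t in at_left q. cdf D t \<le> p"
      using low by (auto simp: eventually_at_left_field intro!: exI[of _ "q - 1"] less_imp_le)
  qed simp
  have l2: "cdf D q \<ge> p"
  proof (rule tendsto_lowerbound)
    show "(cdf D \<longlongrightarrow> cdf D q) (at_right q)"
      using cont by (simp add: isCont_def filterlim_at_split)
    show "\<forall>\<^sub>F t in at_right q. p \<le> cdf D t"
      using up by (auto simp: eventually_at_right_field intro!: exI[of _ "q + 1"])
  qed simp
  show ?thesis using l1 l2 q_def cdf_def2 by simp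
qed

lemma lsf_aff:
  assumes "\<sigma> > 0" "s > 0"
  shows "lsf \<phi> (\<mu> + \<sigma> * t) m s = (1/\<sigma>) * lsf \<phi> t ((m - \<mu>) / \<sigma>) (s / \<sigma>)"
proof -
  have a: "(t - (m - \<mu>) / \<sigma>) / (s / \<sigma>) = (\<mu> + \<sigma> * t - m) / s"
    using assms by (simp add: field_simps)
  show ?thesis unfolding lsf_def a using assms by simp
qed

lemma prod_lsf_aff:
  assumes "\<sigma> > 0" "s > 0"
  shows "(\<Prod>i<n. lsf \<phi> (\<mu> + \<sigma> * z i) m s) = (1/\<sigma>)^n * (\<Prod>i<n. lsf \<phi> (z i) ((m - \<mu>) / \<sigma>) (s / \<sigma>))"
proof -
  have "(\<Prod>i<n. lsf \<phi> (\<mu> + \<sigma> * z i) m s) = (\<Prod>i<n. (1/\<sigma>) * lsf \<phi> (z i) ((m - \<mu>) / \<sigma>) (s / \<sigma>))"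
    by (rule prod.cong) (simp_all only: lsf_aff[OF assms])
  also have "\<dots> = (1/\<sigma>)^n * (\<Prod>i<n. lsf \<phi> (z i) ((m - \<mu>) / \<sigma>) (s / \<sigma>))"
    by (simp only: prod.distrib prod_constant card_lessThan)
  finally show ?thesis .
qed

lemma SUP_reindex_ereal:
  assumes "\<theta> ` A = A" "A \<noteq> {}" "c \<ge> 0"
  shows "(SUP p\<in>A. ereal (c * h (\<theta> p))) = ereal c * (SUP p\<in>A. ereal (h p))"
proof -
  have "(SUP p\<in>A. ereal (c * h (\<theta> p))) = (SUP p\<in>A. ereal c * ereal (h (\<theta> p)))" by simp
  also have "\<dots> = ereal c * (SUP p\<in>A. ereal (h (\<theta> p)))"
    using assms by (simp add: Sup_ereal_mult_left')
  also have "(SUP p\<in>A. ereal (h (\<theta> p))) = (SUP p\<in>\<theta> ` A. ereal (h p))"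
    by (simp add: image_comp)
  finally show ?thesis using assms by simp
qed

lemma numsup_aff:
  assumes s: "\<sigma> > 0"
  shows "numsup \<phi> n (\<lambda>i. \<mu> + \<sigma> * z i) (\<mu> + \<sigma> * z0) = ereal ((1/\<sigma>) ^ Suc n) * numsup \<phi> n z z0"
proof -
  define \<theta> where "\<theta> = (\<lambda>p::real\<times>real. ((fst p - \<mu>) / \<sigma>, snd p / \<sigma>))"
  define h where "h = (\<lambda>p. lsf \<phi> z0 (fst p) (snd p) * (\<Prod>i<n. lsf \<phi> (z i) (fst p) (snd p)))"
  have img: "\<theta> ` (UNIV \<times> {0<..}) = UNIV \<times> {0<..}"
  proof
    show "\<theta> ` (UNIV \<times> {0<..}) \<subseteq> UNIV \<times> {0<..}" using s by (auto simp: \<theta>_def)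
    show "UNIV \<times> {0<..} \<subseteq> \<theta> ` (UNIV \<times> {0<..})"
    proof
      fix q :: "real \<times> real" assume q: "q \<in> UNIV \<times> {0<..}"
      have "q = \<theta> (\<mu> + \<sigma> * fst q, \<sigma> * snd q)" using s by (simp add: \<theta>_def)
      moreover have "(\<mu> + \<sigma> * fst q, \<sigma> * snd q) \<in> UNIV \<times> {0<..}" using q s by auto
      ultimately show "q \<in> \<theta> ` (UNIV \<times> {0<..})" by blast
    qed
  qed
  have eq: "\<And>p. p \<in> UNIV \<times> {0<..} \<Longrightarrow>
     lsf \<phi> (\<mu> + \<sigma> * z0) (fst p) (snd p) * (\<Prod>i<n. lsf \<phi> (\<mu> + \<sigma> * z i) (fst p) (snd p))
     = (1/\<sigma>) ^ Suc n * h (\<theta> p)" (is "\<And>p. _ \<Longrightarrow> ?E p")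
  proof -
    fix p :: "real \<times> real" assume "p \<in> UNIV \<times> {0<..}" hence sp: "snd p > 0" by auto
    show "?E p" unfolding h_def \<theta>_def
      by (simp only: fst_conv snd_conv prod_lsf_aff[OF s sp], simp only: lsf_aff[OF s sp], simp add: mult_ac)
  qed
  have "numsup \<phi> n (\<lambda>i. \<mu> + \<sigma> * z i) (\<mu> + \<sigma> * z0)
      = (SUP p\<in>UNIV \<times> {0<..}. ereal ((1/\<sigma>) ^ Suc n * h (\<theta> p)))"
    unfolding numsup_def by (intro SUP_cong refl) (simp add: eq)
  also have "\<dots> = ereal ((1/\<sigma>) ^ Suc n) * (SUP p\<in>UNIV \<times> {0<..}. ereal (h p))"
    using s by (intro SUP_reindex_ereal img) auto
  finally show ?thesis unfolding numsup_def h_def .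
qed

lemma densup_aff:
  assumes s: "\<sigma> > 0"
  shows "densup \<phi> n (\<lambda>i. \<mu> + \<sigma> * z i) (\<mu> + \<sigma> * z0) = ereal ((1/\<sigma>) ^ Suc n) * densup \<phi> n z z0"
proof -
  define \<theta> where "\<theta> = (\<lambda>p::(real\<times>real)\<times>real. (((fst (fst p) - \<mu>) / \<sigma>, (snd (fst p) - \<mu>) / \<sigma>), snd p / \<sigma>))"
  define h where "h = (\<lambda>p. lsf \<phi> z0 (snd (fst p)) (snd p) * (\<Prod>i<n. lsf \<phi> (z i) (fst (fst p)) (snd p)))"
  have img: "\<theta> ` ((UNIV \<times> UNIV) \<times> {0<..}) = (UNIV \<times> UNIV) \<times> {0<..}"
  proof
    show "\<theta> ` ((UNIV \<times> UNIV) \<times> {0<..}) \<subseteq> (UNIV \<times> UNIV) \<times> {0<..}" using s by (auto simp: \<theta>_def)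
    show "(UNIV \<times> UNIV) \<times> {0<..} \<subseteq> \<theta> ` ((UNIV \<times> UNIV) \<times> {0<..})"
    proof
      fix q :: "(real \<times> real) \<times> real" assume q: "q \<in> (UNIV \<times> UNIV) \<times> {0<..}"
      have "q = \<theta> ((\<mu> + \<sigma> * fst (fst q), \<mu> + \<sigma> * snd (fst q)), \<sigma> * snd q)" using s by (simp add: \<theta>_def)
      moreover have "((\<mu> + \<sigma> * fst (fst q), \<mu> + \<sigma> * snd (fst q)), \<sigma> * snd q) \<in> (UNIV \<times> UNIV) \<times> {0<..}" using q s by auto
      ultimately show "q \<in> \<theta> ` ((UNIV \<times> UNIV) \<times> {0<..})" by blast
    qed
  qed
  have eq: "\<And>p. p \<in> (UNIV \<times> UNIV) \<times> {0<..} \<Longrightarrow>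
     lsf \<phi> (\<mu> + \<sigma> * z0) (snd (fst p)) (snd p) * (\<Prod>i<n. lsf \<phi> (\<mu> + \<sigma> * z i) (fst (fst p)) (snd p))
     = (1/\<sigma>) ^ Suc n * h (\<theta> p)" (is "\<And>p. _ \<Longrightarrow> ?E p")
  proof -
    fix p :: "(real \<times> real) \<times> real" assume "p \<in> (UNIV \<times> UNIV) \<times> {0<..}" hence sp: "snd p > 0" by auto
    show "?E p" unfolding h_def \<theta>_def
      by (simp only: fst_conv snd_conv prod_lsf_aff[OF s sp], simp only: lsf_aff[OF s sp], simp add: mult_ac)
  qed
  have "densup \<phi> n (\<lambda>i. \<mu> + \<sigma> * z i) (\<mu> + \<sigma> * z0)
      = (SUP p\<in>(UNIV \<times> UNIV) \<times> {0<..}. ereal ((1/\<sigma>) ^ Suc n * h (\<theta> p)))"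
    unfolding densup_def by (intro SUP_cong refl) (simp add: eq)
  also have "\<dots> = ereal ((1/\<sigma>) ^ Suc n) * (SUP p\<in>(UNIV \<times> UNIV) \<times> {0<..}. ereal (h p))"
    using s by (intro SUP_reindex_ereal img) auto
  finally show ?thesis unfolding densup_def h_def .
qed

lemma LR_aff:
  assumes s: "\<sigma> > 0"
  shows "LR \<phi> n (\<lambda>i. \<mu> + \<sigma> * z i) (\<mu> + \<sigma> * z0) = LR \<phi> n z z0"
  using s by (simp add: LR_def numsup_aff densup_aff)

lemma LR_restrict: "LR \<phi> n (restrict x {..<n}) y = LR \<phi> n x y"
  unfolding LR_def numsup_def densup_def by simp


lemma sets_lsdist[simp, measurable_cong]: "sets (lsdist \<phi> \<mu> \<sigma>) = sets borel"
  by (simp add: lsdist_def)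

lemma sets_sample[simp, measurable_cong]:
  "sets (sample \<phi> n \<mu> \<sigma>) = sets (PiM {..<n} (\<lambda>_. borel) \<Otimes>\<^sub>M borel)"
  unfolding sample_def
  by (intro sets_pair_measure_cong sets_PiM_cong) simp_all

lemma lsdist_prob:
  assumes [measurable]: "\<phi> \<in> borel_measurable borel" and nn: "\<And>x. \<phi> x \<ge> 0"
    and int: "(\<integral>\<^sup>+ x. ennreal (\<phi> x) \<partial>lborel) = 1" and s: "\<sigma> > 0"
  shows "prob_space (lsdist \<phi> \<mu> \<sigma>)"
proof -
  interpret prob_space "lsdist \<phi> 0 1" using lsdist_prob01[OF assms(1) int] .
  show ?thesis unfolding lsdist_affine[OF assms(1) nn s] by (rule prob_space_distr) simp
qed

lemma sample_prob:
  assumes [measurable]: "\<phi> \<in> borel_measurable borel" and nn: "\<And>x. \<phi> x \<ge> 0"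
    and int: "(\<integral>\<^sup>+ x. ennreal (\<phi> x) \<partial>lborel) = 1" and s: "\<sigma> > 0"
  shows "prob_space (sample \<phi> n \<mu> \<sigma>)"
  unfolding sample_def
  by (intro prob_space_pair prob_space_PiM lsdist_prob[OF assms])

lemma sample_aff:
  assumes [measurable]: "\<phi> \<in> borel_measurable borel" and nn: "\<And>x. \<phi> x \<ge> 0"
    and int: "(\<integral>\<^sup>+ x. ennreal (\<phi> x) \<partial>lborel) = 1" and s: "\<sigma> > 0"
  shows "sample \<phi> n \<mu> \<sigma> = distr (sample \<phi> n 0 1) (sample \<phi> n \<mu> \<sigma>)
           (\<lambda>(z, z0). (\<lambda>i\<in>{..<n}. \<mu> + \<sigma> * z i, \<mu> + \<sigma> * z0))"
proof -
  define L where "L = lsdist \<phi> 0 1"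
  define M where "M = lsdist \<phi> \<mu> \<sigma>"
  define aff where "aff = (\<lambda>z::real. \<mu> + \<sigma> * z)"
  have pL: "prob_space L" unfolding L_def using lsdist_prob01[OF assms(1) int] .
  have pM: "prob_space M" unfolding M_def by (rule lsdist_prob[OF assms])
  have am: "aff \<in> measurable L M" unfolding L_def M_def aff_def by measurable
  have LM: "M = distr L M aff"
    unfolding M_def L_def aff_def lsdist_affine[OF assms(1) nn s]
    by (intro distr_cong) simp_all
  have "PiM {..<n} (\<lambda>_. M) = PiM {..<n} (\<lambda>_. distr L M aff)"
    using LM by simp
  also have "\<dots> = distr (PiM {..<n} (\<lambda>_. L)) (PiM {..<n} (\<lambda>_. M)) (compose {..<n} aff)"
    by (rule distr_PiM_finite_prob_space'[symmetric]) (simp_all add: pL pM am)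
  finally have PM: "PiM {..<n} (\<lambda>_. M) = distr (PiM {..<n} (\<lambda>_. L)) (PiM {..<n} (\<lambda>_. M)) (compose {..<n} aff)" .
  have cm: "compose {..<n} aff \<in> measurable (PiM {..<n} (\<lambda>_. L)) (PiM {..<n} (\<lambda>_. M))"
    unfolding compose_def L_def M_def aff_def by measurable
  have sf: "sigma_finite_measure (distr L M aff)"
    using LM pM prob_space_imp_sigma_finite by metis
  have "sample \<phi> n \<mu> \<sigma> = PiM {..<n} (\<lambda>_. M) \<Otimes>\<^sub>M M" unfolding sample_def M_def ..
  also have "\<dots> = distr (PiM {..<n} (\<lambda>_. L)) (PiM {..<n} (\<lambda>_. M)) (compose {..<n} aff) \<Otimes>\<^sub>M distr L M aff"
    using PM LM by simp
  also have "\<dots> = distr (PiM {..<n} (\<lambda>_. L) \<Otimes>\<^sub>M L) (PiM {..<n} (\<lambda>_. M) \<Otimes>\<^sub>M M)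
      (\<lambda>(x, y). (compose {..<n} aff x, aff y))"
    by (rule pair_measure_distr[OF cm am sf])
  also have "\<dots> = distr (sample \<phi> n 0 1) (sample \<phi> n \<mu> \<sigma>)
           (\<lambda>(z, z0). (\<lambda>i\<in>{..<n}. \<mu> + \<sigma> * z i, \<mu> + \<sigma> * z0))"
    unfolding sample_def L_def M_def aff_def compose_def
    by (intro distr_cong) auto
  finally show ?thesis .
qed

lemma pivot:
  assumes [measurable]: "\<phi> \<in> borel_measurable borel" and nn: "\<And>x. \<phi> x \<ge> 0"
    and int: "(\<integral>\<^sup>+ x. ennreal (\<phi> x) \<partial>lborel) = 1" and s: "\<sigma> > 0"
    and LR_meas: "(\<lambda>(x, y). LR \<phi> n x y) \<in> borel_measurable (PiM {..<n} (\<lambda>_. borel) \<Otimes>\<^sub>M borel)"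
    and hm: "h \<in> borel_measurable borel"
  shows "distr (sample \<phi> n \<mu> \<sigma>) borel (\<lambda>(x, y). h (LR \<phi> n x y))
       = distr (sample \<phi> n 0 1) borel (\<lambda>(x, y). h (LR \<phi> n x y))"
proof -
  define G where "G = (\<lambda>(z, z0). (\<lambda>i\<in>{..<n}. \<mu> + \<sigma> * z i, \<mu> + \<sigma> * z0))"
  have Fm0: "(\<lambda>(x, y). h (LR \<phi> n x y)) \<in> borel_measurable (PiM {..<n} (\<lambda>_. borel) \<Otimes>\<^sub>M borel)"
    using measurable_compose[OF LR_meas hm] by (simp add: comp_def case_prod_beta')
  have Fm: "(\<lambda>(x, y). h (LR \<phi> n x y)) \<in> borel_measurable (sample \<phi> n \<mu> \<sigma>)"
    using Fm0 by (subst measurable_cong_sets[OF sets_sample refl])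
  have Gm0: "G \<in> measurable (PiM {..<n} (\<lambda>_. borel) \<Otimes>\<^sub>M borel) (PiM {..<n} (\<lambda>_. borel) \<Otimes>\<^sub>M borel)"
    unfolding G_def by measurable
  have Gm: "G \<in> measurable (sample \<phi> n 0 1) (sample \<phi> n \<mu> \<sigma>)"
    using Gm0 by (subst measurable_cong_sets[OF sets_sample sets_sample])
  have "distr (sample \<phi> n \<mu> \<sigma>) borel (\<lambda>(x, y). h (LR \<phi> n x y))
      = distr (distr (sample \<phi> n 0 1) (sample \<phi> n \<mu> \<sigma>) G) borel (\<lambda>(x, y). h (LR \<phi> n x y))"
    using sample_aff[OF assms(1-4), of n \<mu>] unfolding G_def by simp
  also have "\<dots> = distr (sample \<phi> n 0 1) borel ((\<lambda>(x, y). h (LR \<phi> n x y)) \<circ> G)"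
    by (rule distr_distr[OF Fm Gm])
  also have "\<dots> = distr (sample \<phi> n 0 1) borel (\<lambda>(x, y). h (LR \<phi> n x y))"
    by (intro distr_cong) (auto simp: G_def LR_restrict LR_aff[OF s])
  finally show ?thesis .
qed

theorem theorem1:
  fixes \<phi> :: "real \<Rightarrow> real" and n :: nat
  assumes phi_meas: "\<phi> \<in> borel_measurable borel"
    and phi_nonneg: "\<And>x. \<phi> x \<ge> 0"
    and phi_int: "(\<integral>\<^sup>+ x. ennreal (\<phi> x) \<partial>lborel) = 1"
    and LR_meas: "(\<lambda>(x, y). LR \<phi> n x y) \<in> borel_measurable (PiM {..<n} (\<lambda>_. borel) \<Otimes>\<^sub>M borel)"
    and sups_ok: "\<And>\<mu>0 \<sigma>0. \<sigma>0 > 0 \<Longrightarrow> AE (x, y) in sample \<phi> n \<mu>0 \<sigma>0.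
        0 < numsup \<phi> n x y \<and> numsup \<phi> n x y < \<infinity> \<and>
        0 < densup \<phi> n x y \<and> densup \<phi> n x y < \<infinity>"
  shows "(\<forall>\<mu>0 \<sigma>0. \<sigma>0 > 0 \<longrightarrow>
            distr (sample \<phi> n \<mu>0 \<sigma>0) borel (\<lambda>(x, y). LR \<phi> n x y)
          = distr (sample \<phi> n 0 1) borel (\<lambda>(x, y). LR \<phi> n x y))
       \<and> (\<forall>(\<alpha>::real) (\<mu>hat :: (nat \<Rightarrow> real) \<Rightarrow> real) (\<sigma>hat :: (nat \<Rightarrow> real) \<Rightarrow> real).
            0 < \<alpha> \<and> \<alpha> < 1 \<and> (\<forall>x. \<sigma>hat x > 0) \<and>
            measure (distr (sample \<phi> n 0 1) borel (\<lambda>(x, y). -2 * ln (LR \<phi> n x y)))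
              {quantile (distr (sample \<phi> n 0 1) borel (\<lambda>(x, y). -2 * ln (LR \<phi> n x y))) (1 - \<alpha>)} = 0
          \<longrightarrow> (\<forall>\<mu>0 \<sigma>0. \<sigma>0 > 0 \<longrightarrow>
                measure (sample \<phi> n \<mu>0 \<sigma>0)
                  {(x, y) \<in> space (sample \<phi> n \<mu>0 \<sigma>0).
                     -2 * ln (LR \<phi> n x y)
                       \<le> quantile (distr (sample \<phi> n (\<mu>hat x) (\<sigma>hat x)) borel
                                    (\<lambda>(x', y'). -2 * ln (LR \<phi> n x' y'))) (1 - \<alpha>)}
                = 1 - \<alpha>))"
  (is "?P1 \<and> ?P2")
proof
  have hid: "(\<lambda>r::real. r) \<in> borel_measurable borel" by simp
  show P1: ?P1
  proof (intro allI impI)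
    fix \<mu>0 \<sigma>0 :: real assume s0: "\<sigma>0 > 0"
    show "distr (sample \<phi> n \<mu>0 \<sigma>0) borel (\<lambda>(x, y). LR \<phi> n x y)
          = distr (sample \<phi> n 0 1) borel (\<lambda>(x, y). LR \<phi> n x y)"
      by (rule pivot[OF phi_meas phi_nonneg phi_int s0 LR_meas hid])
  qed
  show ?P2
  proof (intro allI impI)
    fix \<alpha> :: real and \<mu>hat \<sigma>hat :: "(nat \<Rightarrow> real) \<Rightarrow> real" and \<mu>0 \<sigma>0 :: real
    assume H: "0 < \<alpha> \<and> \<alpha> < 1 \<and> (\<forall>x. \<sigma>hat x > 0) \<and>
            measure (distr (sample \<phi> n 0 1) borel (\<lambda>(x, y). -2 * ln (LR \<phi> n x y)))
              {quantile (distr (sample \<phi> n 0 1) borel (\<lambda>(x, y). -2 * ln (LR \<phi> n x y))) (1 - \<alpha>)} = 0"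
      and s0: "\<sigma>0 > 0"
    define T where "T = (\<lambda>(x::nat\<Rightarrow>real, y::real). -2 * ln (LR \<phi> n x y))"
    define D where "D = distr (sample \<phi> n 0 1) borel T"
    define q where "q = quantile D (1 - \<alpha>)"
    have hm: "(\<lambda>r::real. -2 * ln r) \<in> borel_measurable borel" by measurable
    have piv: "\<And>\<mu> \<sigma>. \<sigma> > 0 \<Longrightarrow> distr (sample \<phi> n \<mu> \<sigma>) borel T = D"
      unfolding T_def D_def by (erule pivot[OF phi_meas phi_nonneg phi_int _ LR_meas hm])
    have qx0: "\<And>x. quantile (distr (sample \<phi> n (\<mu>hat x) (\<sigma>hat x)) borel T) (1 - \<alpha>) = q"
    proof -
      fix x have "\<sigma>hat x > 0" using H by blast
      thus "quantile (distr (sample \<phi> n (\<mu>hat x) (\<sigma>hat x)) borel T) (1 - \<alpha>) = q"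
        unfolding q_def by (simp only: piv)
    qed
    note qx = qx0[unfolded T_def]
    have Tm0: "T \<in> borel_measurable (PiM {..<n} (\<lambda>_. borel) \<Otimes>\<^sub>M borel)"
      using measurable_compose[OF LR_meas hm] unfolding T_def by (simp add: comp_def case_prod_beta')
    have Tm: "\<And>\<mu> \<sigma>. T \<in> borel_measurable (sample \<phi> n \<mu> \<sigma>)"
      using Tm0 by (subst measurable_cong_sets[OF sets_sample refl])
    have "measure (sample \<phi> n \<mu>0 \<sigma>0)
                  {(x, y) \<in> space (sample \<phi> n \<mu>0 \<sigma>0).
                     -2 * ln (LR \<phi> n x y)
                       \<le> quantile (distr (sample \<phi> n (\<mu>hat x) (\<sigma>hat x)) borel
                                    (\<lambda>(x', y'). -2 * ln (LR \<phi> n x' y'))) (1 - \<alpha>)}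
        = measure (sample \<phi> n \<mu>0 \<sigma>0) (T -` {..q} \<inter> space (sample \<phi> n \<mu>0 \<sigma>0))"
      by (simp only: qx, intro arg_cong[where f="measure _"]) (auto simp: T_def)
    also have "\<dots> = measure (distr (sample \<phi> n \<mu>0 \<sigma>0) borel T) {..q}"
      by (rule measure_distr[symmetric]) (simp_all add: Tm)
    also have "\<dots> = measure D {..q}" using piv[OF s0] by simp
    also have "\<dots> = 1 - \<alpha>"
    proof -
      interpret prob_space "sample \<phi> n 0 1" by (rule sample_prob[OF phi_meas phi_nonneg phi_int]) simp
      have rd: "real_distribution D" unfolding D_def by (rule real_distribution_distr) (simp add: Tm)
      show ?thesis unfolding q_def
        by (rule quantile_exact[OF rd]) (use H in \<open>simp_all add: D_def T_def\<close>)
    qed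
    finally show "measure (sample \<phi> n \<mu>0 \<sigma>0)
                  {(x, y) \<in> space (sample \<phi> n \<mu>0 \<sigma>0).
                     -2 * ln (LR \<phi> n x y)
                       \<le> quantile (distr (sample \<phi> n (\<mu>hat x) (\<sigma>hat x)) borel
                                    (\<lambda>(x', y'). -2 * ln (LR \<phi> n x' y'))) (1 - \<alpha>)}
                = 1 - \<alpha>" .
  qed
qed

end
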